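(* Let $X$ be a real linear space, $T$ an infinite index set, and $f, f_t : X \to \overline{\mathbb{R}} := \mathbb{R}\cup\{\pm\infty\}$ ($t \in T$) convex proper functions. Consider the problem $(P)$: minimize $f(x)$ subject to $f_t(x)\le 0$ for all $t\in T$, with optimal value $\inf(P)=\inf\{f(x): f_t(x)\le0\ \forall t\in T\}$. Let $h:=\sup_{t\in T} f_t$ and $\Delta_1 := \operatorname{dom} f\cap\operatorname{dom} h$. Assume the strong Slater condition: there exist $\alpha>0$ and $a\in\operatorname{dom} f$ such that $f_t(a)\le-\alpha$ for all $t\in T$. Then the supremum over $s\ge 0$ below is attained and $$\inf(P)=\max_{s\ge0}\inf_{x\in\Delta_1}\big(f(x)+s\,h(x)\big)=\lim_{\varepsilon\downarrow0}\inf\{f(x): f_t(x)\le\varepsilon \text{ for all } t\in T\}.$$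
   Context: $\operatorname{dom} g := \{x : g(x)<+\infty\}$; a proper function never takes the value $-\infty$ and has nonempty domain. Convention: $\inf\emptyset=+\infty$. *)

theory Defs
  imports "HOL-Analysis.Analysis"
begin

definition ereal_convex :: "('a::real_vector \<Rightarrow> ereal) \<Rightarrow> bool" where
  "ereal_convex g \<longleftrightarrow> convex {(x, r::real). g x \<le> ereal r}"

definition ereal_proper :: "('a \<Rightarrow> ereal) \<Rightarrow> bool" where
  "ereal_proper g \<longleftrightarrow> (\<forall>x. g x \<noteq> -\<infinity>) \<and> (\<exists>x. g x < \<infinity>)"

definition edom :: "('a \<Rightarrow> ereal) \<Rightarrow> 'a set" where
  "edom g = {x. g x < \<infinity>}"

end

theory Submission
  imports Defs
begin

lemma dual_core:
  fixes F H :: "'a \<Rightarrow> real" and p :: real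
  assumes cv: "\<And>x y l. x \<in> D \<Longrightarrow> y \<in> D \<Longrightarrow> 0 \<le> l \<Longrightarrow> l \<le> 1 \<Longrightarrow>
      l * H x + (1 - l) * H y \<le> 0 \<Longrightarrow> p \<le> l * F x + (1 - l) * F y"
    and aD: "a \<in> D" and Ha: "H a < 0"
  shows "\<exists>s\<ge>0. \<forall>x\<in>D. p \<le> F x + s * H x"
proof -
  have feas: "p \<le> F x" if "x \<in> D" "H x \<le> 0" for x
    using cv[OF that(1) that(1), of 1] that by simp
  have key: "(p - F y) / H y \<le> (F x - p) / (- H x)"
    if x: "x \<in> D" "H x < 0" and y: "y \<in> D" "H y > 0" for x y
  proof -
    define l where "l = H y / (H y - H x)"
    have d: "H y - H x > 0" using x y by simp
    have l0: "0 \<le> l" "l \<le> 1" using x y d unfolding l_def by (auto simp: field_simps)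
    have "l * H x + (1 - l) * H y = 0" using d unfolding l_def by (simp add: field_simps)
    then have pl: "p \<le> l * F x + (1 - l) * F y" using cv[OF x(1) y(1) l0] by simp
    have dl: "(H y - H x) * l = H y" using d unfolding l_def by simp
    have dl1: "(H y - H x) * (1 - l) = - H x" using dl by (simp add: right_diff_distrib)
    have "(H y - H x) * p \<le> (H y - H x) * (l * F x + (1 - l) * F y)"
      by (rule mult_left_mono[OF pl]) (use d in simp)
    also have "\<dots> = ((H y - H x) * l) * F x + ((H y - H x) * (1 - l)) * F y"
      by (simp only: distrib_left mult.assoc)
    finally have "p * (H y - H x) \<le> H y * F x - H x * F y" unfolding dl dl1 by (simp add: mult.commute)
    then show ?thesis using x y by (simp add: field_simps)
  qed
  define S where "S = insert 0 ((\<lambda>y. (p - F y) / H y) ` {y\<in>D. H y > 0})"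
  define s where "s = Sup S"
  have bdd: "bdd_above S"
  proof -
    have "\<forall>z\<in>S. z \<le> max 0 ((F a - p) / (- H a))"
      unfolding S_def using key[OF aD Ha] by (auto simp: le_max_iff_disj)
    then show ?thesis by (auto simp: bdd_above_def)
  qed
  have s0: "s \<ge> 0" unfolding s_def by (rule cSup_upper[OF _ bdd]) (simp add: S_def)
  have "p \<le> F x + s * H x" if xD: "x \<in> D" for x
  proof (cases "H x > 0")
    case True
    have "(p - F x) / H x \<le> s" unfolding s_def
      by (rule cSup_upper[OF _ bdd]) (use xD True in \<open>auto simp: S_def\<close>)
    then show ?thesis using True by (simp add: field_simps)
  next
    case False
    show ?thesis
    proof (cases "H x = 0")
      case True then show ?thesis using feas[OF xD] by simp
    next
      case False2: False
      then have hn: "H x < 0" using False by simp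
      have "s \<le> (F x - p) / (- H x)" unfolding s_def
        apply (rule cSup_least)
        using feas[OF xD] hn key[OF xD hn] divide_nonneg_pos[of "F x - p" "- H x"] by (auto simp: S_def)
      then show ?thesis using hn by (simp add: field_simps)
    qed
  qed
  then show ?thesis using s0 by blast
qed

lemma ereal_convexD:
  assumes "ereal_convex g" "g x \<le> ereal u" "g y \<le> ereal v" "0 \<le> l" "l \<le> 1"
  shows "g (l *\<^sub>R x + (1 - l) *\<^sub>R y) \<le> ereal (l * u + (1 - l) * v)"
proof -
  have "(l *\<^sub>R (x, u) + (1 - l) *\<^sub>R (y, v)) \<in> {(x, r::real). g x \<le> ereal r}"
    using assms unfolding ereal_convex_def
    by (intro convexD[where s="{(x, r::real). g x \<le> ereal r}"]) auto
  then show ?thesis by simp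
qed


theorem proposition3p2:
  fixes f :: "'a::real_vector \<Rightarrow> ereal"
    and ft :: "'t \<Rightarrow> 'a \<Rightarrow> ereal"
    and T :: "'t set"
  assumes "infinite T"
    and "ereal_convex f" and "ereal_proper f"
    and "\<And>t. t \<in> T \<Longrightarrow> ereal_convex (ft t) \<and> ereal_proper (ft t)"
    and "\<exists>\<alpha>>0. \<exists>a\<in>edom f. \<forall>t\<in>T. ft t a \<le> ereal (-\<alpha>)"
  shows "let h = (\<lambda>x. SUP t\<in>T. ft t x);
             \<Delta>\<^sub>1 = edom f \<inter> edom h;
             infP = (INF x\<in>{x. \<forall>t\<in>T. ft t x \<le> 0}. f x);
             L = (\<lambda>s::real. INF x\<in>\<Delta>\<^sub>1. f x + ereal s * h x)
         in (\<exists>s0\<ge>0. L s0 = (SUP s\<in>{0..}. L s))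
            \<and> infP = (SUP s\<in>{0..}. L s)
            \<and> ((\<lambda>\<epsilon>::real. INF x\<in>{x. \<forall>t\<in>T. ft t x \<le> ereal \<epsilon>}. f x) \<longlongrightarrow> infP) (at_right 0)"
proof -
  define h where "h = (\<lambda>x. SUP t\<in>T. ft t x)"
  define D where "D = edom f \<inter> edom h"
  define infP where "infP = (INF x\<in>{x. \<forall>t\<in>T. ft t x \<le> 0}. f x)"
  define L where "L = (\<lambda>s::real. INF x\<in>D. f x + ereal s * h x)"
  define V where "V = (\<lambda>\<epsilon>::real. INF x\<in>{x. \<forall>t\<in>T. ft t x \<le> ereal \<epsilon>}. f x)"
  obtain \<alpha> a where al: "\<alpha> > 0" "a \<in> edom f" "\<forall>t\<in>T. ft t a \<le> ereal (-\<alpha>)"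
    using assms(5) by blast
  obtain t0 where t0: "t0 \<in> T" using assms(1) by (metis finite.emptyI ex_in_conv)
  have fnm: "f x \<noteq> -\<infinity>" for x using assms(3) unfolding ereal_proper_def by blast
  have hnm: "h x \<noteq> -\<infinity>" for x
  proof -
    have "ft t0 x \<le> h x" unfolding h_def using t0 by (rule SUP_upper)
    moreover have "ft t0 x \<noteq> -\<infinity>" using assms(4)[OF t0] unfolding ereal_proper_def by blast
    ultimately show ?thesis by auto
  qed
  have hle: "h x \<le> e \<longleftrightarrow> (\<forall>t\<in>T. ft t x \<le> e)" for x e unfolding h_def by (simp add: SUP_le_iff)
  define F where "F = (\<lambda>x. real_of_ereal (f x))"
  define H where "H = (\<lambda>x. real_of_ereal (h x))"
  have fin: "f x = ereal (F x)" "h x = ereal (H x)" if "x \<in> D" for x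
    using that fnm[of x] hnm[of x] unfolding D_def edom_def F_def H_def by (auto simp: ereal_real)
  have ha: "h a \<le> ereal (-\<alpha>)" using al(3) hle by blast
  have aD: "a \<in> D" using al ha unfolding D_def edom_def by auto
  have infP_le: "infP \<le> f a" unfolding infP_def using al(3) al(1)
    by (intro INF_lower) (auto intro: order_trans)
  have Lb: "L s \<le> infP" if "s \<ge> 0" for s
    unfolding infP_def
  proof (rule INF_greatest)
    fix x assume x: "x \<in> {x. \<forall>t\<in>T. ft t x \<le> 0}"
    show "L s \<le> f x"
    proof (cases "f x = \<infinity>")
      case False
      have hx: "h x \<le> 0" using x hle by blast
      then have xD: "x \<in> D" using False unfolding D_def edom_def by (auto simp: less_top)
      have "L s \<le> f x + ereal s * h x" unfolding L_def using xD by (rule INF_lower)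
      also have "\<dots> \<le> f x"
      proof -
        obtain u v where uv: "f x = ereal u" "h x = ereal v" using fin[OF xD] by blast
        then have "v \<le> 0" using hx by (simp add: zero_ereal_def)
        then have "s * v \<le> 0" using that by (simp add: mult_nonneg_nonpos)
        then show ?thesis using uv by simp
      qed
      finally show ?thesis .
    qed simp
  qed
  have main: "(\<exists>s0\<ge>0. L s0 = (SUP s\<in>{0..}. L s)) \<and> infP = (SUP s\<in>{0..}. L s) \<and> (V \<longlongrightarrow> infP) (at_right 0)"
  proof (cases "infP = -\<infinity>")
    case True
    have Lm: "L s = -\<infinity>" if "s \<ge> 0" for s using Lb[OF that] True by simp
    have S: "(SUP s\<in>{0..}. L s) = -\<infinity>" 
    proof -
      have "(SUP s\<in>{0..}. L s) \<le> -\<infinity>" by (rule SUP_least) (simp add: Lm)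
      then show ?thesis by simp
    qed
    have ev: "V e = infP" if "0 < e" "e < (1::real)" for e
    proof -
      have "V e \<le> infP" unfolding V_def infP_def using that
        by (intro INF_superset_mono) (auto intro: order_trans)
      then show "V e = infP" using True by simp
    qed
    have "eventually (\<lambda>e. V e = infP) (at_right 0)"
      unfolding eventually_at_right_field using ev zero_less_one by blast
    then have "(V \<longlongrightarrow> infP) (at_right 0)" by (rule tendsto_eventually)
    then show ?thesis using S True Lm by auto
  next
    case False
    then obtain p where p: "infP = ereal p" using infP_le al(2) unfolding edom_def
      by (cases infP) auto
    have "\<exists>s\<ge>0. \<forall>x\<in>D. p \<le> F x + s * H x"
    proof (rule dual_core[OF _ aD])
      have "ereal (H a) \<le> ereal (-\<alpha>)" using ha fin(2)[OF aD] by simp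
      then show "H a < 0" using al(1) by simp
    next
      fix x y and l :: real
      assume xy: "x \<in> D" "y \<in> D" "0 \<le> l" "l \<le> 1"
        and c: "l * H x + (1 - l) * H y \<le> 0"
      define z where "z = l *\<^sub>R x + (1 - l) *\<^sub>R y"
      have "\<forall>t\<in>T. ft t z \<le> 0"
      proof
        fix t assume t: "t \<in> T"
        have "ft t x \<le> h x" "ft t y \<le> h y" unfolding h_def using t by (auto intro: SUP_upper)
        then have "ft t z \<le> ereal (l * H x + (1 - l) * H y)"
          unfolding z_def using assms(4)[OF t] xy fin(2)[OF xy(1)] fin(2)[OF xy(2)]
          by (intro ereal_convexD) auto
        also have "\<dots> \<le> 0" using c by (simp add: zero_ereal_def)
        finally show "ft t z \<le> 0" .
      qed
      then have "infP \<le> f z" unfolding infP_def by (intro INF_lower) simp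
      also have "f z \<le> ereal (l * F x + (1 - l) * F y)"
        unfolding z_def using assms(2) xy fin(1)[OF xy(1)] fin(1)[OF xy(2)]
        by (intro ereal_convexD) auto
      finally show "p \<le> l * F x + (1 - l) * F y" using p by simp
    qed
    then obtain s0 where s0: "s0 \<ge> 0" "\<And>x. x \<in> D \<Longrightarrow> p \<le> F x + s0 * H x"
      by blast
    have "infP \<le> L s0" unfolding L_def p
    proof (rule INF_greatest)
      fix x assume xD: "x \<in> D"
      have "f x + ereal s0 * h x = ereal (F x + s0 * H x)"
        using fin[OF xD] by simp
      then show "ereal p \<le> f x + ereal s0 * h x" using s0(2)[OF xD] by simp
    qed
    then have Ls0: "L s0 = infP" using Lb[OF s0(1)] by simp
    have S: "(SUP s\<in>{0..}. L s) = infP"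
      by (rule antisym) (auto intro!: SUP_least Lb SUP_upper2[of s0] simp: Ls0 s0(1))
    have lo: "ereal (p - s0 * e) \<le> V e" if "e > 0" for e
      unfolding V_def
    proof (rule INF_greatest)
      fix x assume x: "x \<in> {x. \<forall>t\<in>T. ft t x \<le> ereal e}"
      show "ereal (p - s0 * e) \<le> f x"
      proof (cases "f x = \<infinity>")
        case False
        have hx: "h x \<le> ereal e" using x hle by blast
        then have xD: "x \<in> D" using False unfolding D_def edom_def by (auto simp: less_top)
        have "H x \<le> e" using hx fin(2)[OF xD] by simp
        then have "s0 * H x \<le> s0 * e" using s0(1) by (rule mult_left_mono)
        then have "p - s0 * e \<le> F x" using s0(2)[OF xD] by simp
        then show ?thesis using fin(1)[OF xD] by simp
      qed simp
    qed
    have up: "V e \<le> infP" if "e > 0" for e unfolding V_def infP_def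
      using that by (intro INF_superset_mono) (auto intro: order_trans)
    have "((\<lambda>e. ereal (p - s0 * e)) \<longlongrightarrow> ereal (p - s0 * 0)) (at_right 0)"
      by (intro tendsto_intros)
    then have l1: "((\<lambda>e. ereal (p - s0 * e)) \<longlongrightarrow> infP) (at_right 0)" using p by simp
    have "(V \<longlongrightarrow> infP) (at_right 0)"
      by (rule tendsto_sandwich[OF _ _ l1 tendsto_const])
        (auto simp: eventually_at_right_field intro!: exI[of _ 1] lo up)
    then show ?thesis using S Ls0 s0(1) by auto
  qed
  then show ?thesis unfolding Let_def h_def D_def infP_def L_def V_def .
qed

end
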